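(* Let $A \in \mathbb{C}^{m\times n}$, let $k$ be an integer with $1 \le k \le \min\{m,n\}$, and let $s,t$ be integers with $0 \le s < k$, $t \ge 1$ and $s+t \le n$. Let $Q \in \mathbb{C}^{m\times m}$ be unitary and $\Pi$ an $n\times n$ permutation matrix such that $R^{(0)} := Q^*A\Pi$ has $\mathrm{GB}(s)$ form. For $s < j \le s+t$ write $\gamma(j) = \|R^{(0)}((s+1):m,\, j)\|_2^2$, and let $\mu = \max_{s+t<j\le n}\|A\Pi(:,j)\|_2^2$ (with $\mu=0$ if $s+t=n$). Assume $$\max_{s<j\le s+t}\gamma(j) \;\ge\; \mu .$$ Let $b$ be an integer with $1 \le b \le t$, and let $\sigma$ be a permutation of $\{1,\dots,t\}$ such that $\gamma(s+\sigma(1)) \ge \gamma(s+\sigma(2)) \ge \dots \ge \gamma(s+\sigma(t))$. Call the indices $s+\sigma(1),\dots,s+\sigma(b)$ the candidates, and let $\delta = \max\{\gamma(j) : j \in \{s+1,\dots,s+t\} \text{ not a candidate}\}$ (with $\delta = 0$ if $b=t$). Let $B = R^{(0)}((s+1):m,\; [s+\sigma(1),\dots,s+\sigma(b)]) \in \mathbb{C}^{(m-s)\times b}$, let $d=\min\{m-s,\,b\}$, and apply $d$ steps of the Golub–Businger algorithm to $B$, producing a permutation matrix $\widehat{P}$ of size $b$, Householder reflections $H_1,\dots,H_d \in \mathbb{C}^{(m-s)\times(m-s)}$ and $\widehat{R} = H_d\cdots H_1 B \widehat{P}$. Let $$c = \max\{\, i \in \{1,\dots,d\} : |\widehat{R}(i,i)|^2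 \ge \max(\delta,\mu) \,\}.$$ Let $\widehat{\Pi}$ be an $n\times n$ permutation matrix which fixes every column position outside $\{s+1,\dots,s+t\}$, places the candidate columns of $R^{(0)}$ (i.e. the columns of $R^{(0)}$ whose restrictions to rows $(s+1):m$ are the columns of $B$) into positions $s+1,\dots,s+b$ in the order given by $B\widehat{P}$ (so that $R^{(0)}\widehat{\Pi}((s+1):m,\,(s+1):(s+b)) = B\widehat{P}$), and places the remaining non-candidate indices of $\{s+1,\dots,s+t\}$ into positions $s+b+1,\dots,s+t$ in some order. Let $$\widehat{Q} = \begin{bmatrix} I_{s\times s} & 0 \\ 0 & H_1H_2\cdots H_c\end{bmatrix}.$$ Then $(Q\widehat{Q})^*A(\Pi\widehat{\Pi})$ has $\mathrm{GB}(s+c)$ form.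
   Context: A matrix $R \in \mathbb{C}^{m\times n}$ is said to have $\mathrm{GB}(k)$ form (for $0\le k\le\min\{m,n\}$) if its first $k$ columns are upper-triangular and $|R(i,i)| = \max_{i\le j\le n}\|R(i:m,\,j)\|_2$ for $1\le i\le k$; every matrix is in $\mathrm{GB}(0)$ form. Notation $R(i:m, j)$ denotes entries $i,\dots,m$ of column $j$; $A(:,j)$ is the $j$-th column. A Householder reflection at step $i$ on $\mathbb{C}^{p}$ is a unitary matrix $I - \tau vv^*$ with real $\tau\ge 0$, $v(1)=\dots=v(i-1)=0$, $v(i)=1$, which maps a given vector $x$ to $[x(1),\dots,x(i-1),\mu',0,\dots,0]$ with $|\mu'| = \|x(i:p)\|_2$. The Golub–Businger algorithm applied to $B\in\mathbb{C}^{p\times b}$ for $d\le\min\{p,b\}$ steps: set $R\leftarrow B$; for $i=1,\dots,d$, pick $j_{\max}\in\arg\max_{j\ge i}\|R(i:p,j)\|_2$, swap columns $i$ and $j_{\max}$ of $R$ (recording the swap in the permutation $\widehat{P}$), compute the Householder reflection $H_i$ at step $i$ zeroing entries $(i+1):p$ of column $i$, and set $R\leftarrow H_iR$. The output $\widehat R$ is the final $R$, which equals $H_d\cdots H_1 B\widehat P$. *)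

theory Defs
  imports "Jordan_Normal_Form.Matrix" "HOL-Combinatorics.Transposition" "HOL-Combinatorics.Permutations"
begin

(* All indices are 0-based: row/column i here corresponds to i+1 in the paper. *)

definition ctrans :: "complex mat \<Rightarrow> complex mat" where
  "ctrans A = mat (dim_col A) (dim_row A) (\<lambda>(i,j). cnj (A $$ (j,i)))"

definition unitary_mat :: "nat \<Rightarrow> complex mat \<Rightarrow> bool" where
  "unitary_mat p U \<longleftrightarrow> U \<in> carrier_mat p p \<and> ctrans U * U = 1\<^sub>m p"

(* permutation matrix of a permutation f of {0..<n}: column j has its 1 in row f j,
   so (A * perm_mat n f) has column j equal to column f j of A *)
definition perm_mat :: "nat \<Rightarrow> (nat \<Rightarrow> nat) \<Rightarrow> complex mat" where
  "perm_mat n f = mat n n (\<lambda>(i,j). if i = f j then 1 else 0)"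

definition is_perm_mat :: "nat \<Rightarrow> complex mat \<Rightarrow> bool" where
  "is_perm_mat n P \<longleftrightarrow> (\<exists>f. f permutes {..<n} \<and> P = perm_mat n f)"

definition subcol_norm :: "complex mat \<Rightarrow> nat \<Rightarrow> nat \<Rightarrow> real" where
  "subcol_norm R i j = sqrt (\<Sum>r\<in>{i..<dim_row R}. (cmod (R $$ (r,j)))\<^sup>2)"

definition GB_form :: "nat \<Rightarrow> complex mat \<Rightarrow> bool" where
  "GB_form k R \<longleftrightarrow> k \<le> min (dim_row R) (dim_col R) \<and>
     (\<forall>j<k. \<forall>i. j < i \<and> i < dim_row R \<longrightarrow> R $$ (i,j) = 0) \<and>
     (\<forall>i<k. cmod (R $$ (i,i)) = Max ((\<lambda>j. subcol_norm R i j) ` {i..<dim_col R}))"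

definition householder :: "nat \<Rightarrow> nat \<Rightarrow> complex vec \<Rightarrow> complex mat \<Rightarrow> bool" where
  "householder p i x H \<longleftrightarrow> unitary_mat p H \<and>
     (\<exists>\<tau> v. \<tau> \<ge> 0 \<and> v \<in> carrier_vec p \<and> (\<forall>l<i. v $ l = 0) \<and> v $ i = 1 \<and>
        H = mat p p (\<lambda>(a,b). (if a = b then 1 else 0) - complex_of_real \<tau> * v $ a * cnj (v $ b))) \<and>
     (\<forall>l<i. (H *\<^sub>v x) $ l = x $ l) \<and>
     (\<forall>l. i < l \<and> l < p \<longrightarrow> (H *\<^sub>v x) $ l = 0) \<and>
     cmod ((H *\<^sub>v x) $ i) = sqrt (\<Sum>l\<in>{i..<p}. (cmod (x $ l))\<^sup>2)"

definition swap_cols :: "complex mat \<Rightarrow> nat \<Rightarrow> nat \<Rightarrow> complex mat" where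
  "swap_cols R i j = mat (dim_row R) (dim_col R) (\<lambda>(a,c). R $$ (a, Transposition.transpose i j c))"

(* gb_run B i f Hs R : after i steps of Golub-Businger on B (p x b) with some admissible
   choices, the current matrix is R, the Householder reflections are Hs = [H_1,...,H_i]
   and the accumulated column permutation is perm_mat b f (R = H_i...H_1 B perm_mat b f). *)
inductive gb_run :: "complex mat \<Rightarrow> nat \<Rightarrow> (nat \<Rightarrow> nat) \<Rightarrow> complex mat list \<Rightarrow> complex mat \<Rightarrow> bool"
  for B :: "complex mat" where
  gb_init: "gb_run B 0 id [] B"
| gb_step: "\<lbrakk> gb_run B i f Hs R; i < min (dim_row B) (dim_col B);
     i \<le> jmax; jmax < dim_col B;
     \<forall>j. i \<le> j \<and> j < dim_col B \<longrightarrow> subcol_norm R i j \<le> subcol_norm R i jmax;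
     householder (dim_row B) i (col (swap_cols R i jmax) i) H \<rbrakk>
   \<Longrightarrow> gb_run B (Suc i) (f \<circ> Transposition.transpose i jmax) (Hs @ [H]) (H * swap_cols R i jmax)"

definition blockdiag_id :: "nat \<Rightarrow> complex mat \<Rightarrow> complex mat" where
  "blockdiag_id s M = mat (s + dim_row M) (s + dim_col M)
     (\<lambda>(a,c). if a < s \<and> c < s then (if a = c then 1 else 0)
             else if s \<le> a \<and> s \<le> c then M $$ (a - s, c - s) else 0)"

end

theory Submission imports Defs "Jordan_Normal_Form.Determinant" begin

lemma ctrans_carrier[simp]: "dim_row (ctrans A) = dim_col A" "dim_col (ctrans A) = dim_row A"
  by (auto simp: ctrans_def)

lemma ctrans_carrier_mat[simp]: "A \<in> carrier_mat n m \<Longrightarrow> ctrans A \<in> carrier_mat m n"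
  by (metis carrier_matD(1) carrier_matD(2) carrier_matI ctrans_carrier(1) ctrans_carrier(2))

lemma index_ctrans[simp]: "i < dim_col A \<Longrightarrow> j < dim_row A \<Longrightarrow> ctrans A $$ (i,j) = cnj (A $$ (j,i))"
  by (auto simp: ctrans_def)

lemma ctrans_mult: assumes "A \<in> carrier_mat n k" "B \<in> carrier_mat k m"
  shows "ctrans (A * B) = ctrans B * ctrans A"
proof (rule eq_matI)
  fix i j assume ij: "i < dim_row (ctrans B * ctrans A)" "j < dim_col (ctrans B * ctrans A)"
  then show "ctrans (A * B) $$ (i, j) = (ctrans B * ctrans A) $$ (i, j)"
    using assms by (simp add: scalar_prod_def cnj_sum, intro sum.cong) (auto simp: mult.commute)
qed (use assms in auto)

lemma ctrans_one[simp]: "ctrans (1\<^sub>m n) = 1\<^sub>m n"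
  by (rule eq_matI) auto

lemma ctrans_ctrans[simp]: "ctrans (ctrans A) = A"
  by (rule eq_matI) auto

definition cdot :: "complex vec \<Rightarrow> complex vec \<Rightarrow> complex" where
  "cdot x y = (\<Sum>i<dim_vec y. cnj (x $ i) * y $ i)"

lemma cdot_adj: assumes U: "U \<in> carrier_mat p q" and x: "x \<in> carrier_vec q" and y: "y \<in> carrier_vec p"
  shows "cdot (U *\<^sub>v x) y = cdot x (ctrans U *\<^sub>v y)"
proof -
  have "cdot (U *\<^sub>v x) y = (\<Sum>r<p. cnj (\<Sum>a<q. U $$ (r,a) * x $ a) * y $ r)"
    using U x y by (auto simp: cdot_def scalar_prod_def atLeast0LessThan intro!: sum.cong)
  also have "\<dots> = (\<Sum>r<p. \<Sum>a<q. cnj (U $$ (r,a)) * cnj (x $ a) * y $ r)"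
    by (simp add: sum_distrib_right)
  also have "\<dots> = (\<Sum>a<q. \<Sum>r<p. cnj (U $$ (r,a)) * cnj (x $ a) * y $ r)"
    by (rule sum.swap)
  also have "\<dots> = (\<Sum>a<q. cnj (x $ a) * (\<Sum>r<p. cnj (U $$ (r,a)) * y $ r))"
    by (simp add: sum_distrib_left mult_ac)
  also have "\<dots> = cdot x (ctrans U *\<^sub>v y)"
    using U x y by (auto simp: cdot_def scalar_prod_def atLeast0LessThan intro!: sum.cong)
  finally show ?thesis .
qed

lemma cdot_self: "cdot x x = of_real (\<Sum>i<dim_vec x. (cmod (x $ i))\<^sup>2)"
  unfolding cdot_def of_real_sum
  by (rule sum.cong) (simp, metis complex_norm_square mult.commute)

lemma unitary_norm: assumes U: "U \<in> carrier_mat p p" "ctrans U * U = 1\<^sub>m p" and y: "y \<in> carrier_vec p"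
  shows "(\<Sum>i<p. (cmod ((U *\<^sub>v y) $ i))\<^sup>2) = (\<Sum>i<p. (cmod (y $ i))\<^sup>2)"
proof -
  have "cdot (U *\<^sub>v y) (U *\<^sub>v y) = cdot y (ctrans U *\<^sub>v (U *\<^sub>v y))"
    using U y by (intro cdot_adj) auto
  also have "ctrans U *\<^sub>v (U *\<^sub>v y) = y"
    using U y by (metis assoc_mult_mat_vec ctrans_carrier_mat one_mult_mat_vec)
  finally have "complex_of_real (\<Sum>i<p. (cmod ((U *\<^sub>v y) $ i))\<^sup>2) = complex_of_real (\<Sum>i<p. (cmod (y $ i))\<^sup>2)"
    using U y unfolding cdot_self by simp
  then show ?thesis using of_real_eq_iff by blast
qed


definition vn :: "nat \<Rightarrow> complex vec \<Rightarrow> real" where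
  "vn a y = (\<Sum>r\<in>{a..<dim_vec y}. (cmod (y $ r))\<^sup>2)"

lemma vn_mono: "a \<le> a' \<Longrightarrow> vn a' y \<le> vn a y"
  unfolding vn_def by (rule sum_mono2) auto

lemma vn_nonneg: "0 \<le> vn a y"
  unfolding vn_def by (rule sum_nonneg) auto

lemma vn_split: "a \<le> a' \<Longrightarrow> a' \<le> dim_vec y \<Longrightarrow> vn a y = (\<Sum>r\<in>{a..<a'}. (cmod (y $ r))\<^sup>2) + vn a' y"
  unfolding vn_def by (simp add: sum.atLeastLessThan_concat)

lemma unitary_vn: assumes U: "U \<in> carrier_mat p p" "ctrans U * U = 1\<^sub>m p" and y: "y \<in> carrier_vec p"
  shows "vn 0 (U *\<^sub>v y) = vn 0 y"
  using unitary_norm[OF assms] U y unfolding vn_def by (simp add: atLeast0LessThan)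

lemma subcol_vn: "j < dim_col M \<Longrightarrow> subcol_norm M a j = sqrt (vn a (col M j))"
  unfolding subcol_norm_def vn_def by (auto intro!: sum.cong)

lemma subcol_mono: "a \<le> a' \<Longrightarrow> subcol_norm M a' j \<le> subcol_norm M a j"
  unfolding subcol_norm_def by (auto intro!: sum_mono2)

lemma subcol_nonneg: "0 \<le> subcol_norm M a j"
  unfolding subcol_norm_def by (auto intro!: sum_nonneg)

definition reflok :: "nat \<Rightarrow> complex mat \<Rightarrow> bool" where
  "reflok p H \<longleftrightarrow> H \<in> carrier_mat p p \<and> ctrans H * H = 1\<^sub>m p \<and> ctrans H = H"

lemma householder_expl:
  assumes "householder p i x H"
  obtains \<tau> v where "v \<in> carrier_vec p" "\<forall>l<i. v $ l = 0"
    "H = mat p p (\<lambda>(a,b). (if a = b then 1 else 0) - complex_of_real \<tau> * v $ a * cnj (v $ b))"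
  using assms unfolding householder_def by blast

lemma householder_reflok: assumes "householder p i x H" shows "reflok p H"
proof -
  obtain \<tau> v where v: "v \<in> carrier_vec p" "\<forall>l<i. v $ l = 0"
    and H: "H = mat p p (\<lambda>(a,b). (if a = b then 1 else 0) - complex_of_real \<tau> * v $ a * cnj (v $ b))"
    using householder_expl[OF assms] by blast
  have "ctrans H = H" unfolding H by (rule eq_matI) (auto simp: mult.commute)
  then show ?thesis using assms unfolding reflok_def householder_def unitary_mat_def by auto
qed

lemma householder_apply:
  assumes h: "householder p i x H" and y: "y \<in> carrier_vec p"
  shows "\<exists>\<tau> v. (\<forall>l<i. v $ l = 0) \<and>
    (\<forall>a<p. (H *\<^sub>v y) $ a = y $ a - complex_of_real \<tau> * v $ a * (\<Sum>b<p. cnj (v $ b) * y $ b))"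
proof -
  obtain \<tau> v where v: "v \<in> carrier_vec p" "\<forall>l<i. v $ l = 0"
    and H: "H = mat p p (\<lambda>(a,b). (if a = b then 1 else 0) - complex_of_real \<tau> * v $ a * cnj (v $ b))"
    using householder_expl[OF h] by blast
  have "(H *\<^sub>v y) $ a = y $ a - complex_of_real \<tau> * v $ a * (\<Sum>b<p. cnj (v $ b) * y $ b)" if a: "a < p" for a
  proof -
    have "(H *\<^sub>v y) $ a = (\<Sum>b\<in>{0..<p}. ((if a = b then 1 else 0) - complex_of_real \<tau> * v $ a * cnj (v $ b)) * y $ b)"
      using a y unfolding H by (auto simp: scalar_prod_def intro!: sum.cong)
    also have "\<dots> = (\<Sum>b\<in>{0..<p}. (if a = b then y $ b else 0) - complex_of_real \<tau> * v $ a * (cnj (v $ b) * y $ b))"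
      by (intro sum.cong) (auto simp: algebra_simps)
    also have "\<dots> = (\<Sum>b\<in>{0..<p}. (if a = b then y $ b else 0)) - (\<Sum>b\<in>{0..<p}. complex_of_real \<tau> * v $ a * (cnj (v $ b) * y $ b))"
      by (rule sum_subtractf)
    also have "\<dots> = y $ a - complex_of_real \<tau> * v $ a * (\<Sum>b<p. cnj (v $ b) * y $ b)"
      using a by (simp add: sum_distrib_left atLeast0LessThan)
    finally show ?thesis .
  qed
  then show ?thesis using v by blast
qed

lemma householder_top: assumes h: "householder p i x H" and y: "y \<in> carrier_vec p" and r: "r < i" "r < p"
  shows "(H *\<^sub>v y) $ r = y $ r"
proof -
  obtain \<tau> v where v: "\<forall>l<i. v $ l = 0"
    "\<forall>a<p. (H *\<^sub>v y) $ a = y $ a - complex_of_real \<tau> * v $ a * (\<Sum>b<p. cnj (v $ b) * y $ b)"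
    using householder_apply[OF h y] by blast
  show ?thesis using v r by auto
qed

lemma householder_fix: assumes h: "householder p i x H" and y: "y \<in> carrier_vec p"
  and z: "\<forall>r. i \<le> r \<and> r < p \<longrightarrow> y $ r = 0"
  shows "H *\<^sub>v y = y"
proof -
  obtain \<tau> v where v: "\<forall>l<i. v $ l = 0"
    "\<forall>a<p. (H *\<^sub>v y) $ a = y $ a - complex_of_real \<tau> * v $ a * (\<Sum>b<p. cnj (v $ b) * y $ b)"
    using householder_apply[OF h y] by blast
  have "(\<Sum>b<p. cnj (v $ b) * y $ b) = 0"
  proof (rule sum.neutral, intro ballI)
    fix b assume "b \<in> {..<p}"
    then show "cnj (v $ b) * y $ b = 0" using v(1) z by (cases "b < i") auto
  qed
  then show ?thesis using v(2) y h unfolding householder_def unitary_mat_def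
    by (intro eq_vecI) (auto simp: carrier_vecD)
qed

lemma householder_tail: assumes h: "householder p i x H" and y: "y \<in> carrier_vec p" and j: "j \<le> i"
  shows "vn j (H *\<^sub>v y) = vn j y"
proof -
  have Hc: "H \<in> carrier_mat p p" "ctrans H * H = 1\<^sub>m p"
    using h unfolding householder_def unitary_mat_def by auto
  have tot: "vn 0 (H *\<^sub>v y) = vn 0 y" by (rule unitary_vn[OF Hc y])
  show ?thesis
  proof (cases "j \<le> p")
    case True
    have top: "(\<Sum>r\<in>{0..<j}. (cmod ((H *\<^sub>v y) $ r))\<^sup>2) = (\<Sum>r\<in>{0..<j}. (cmod (y $ r))\<^sup>2)"
      using householder_top[OF h y] j True by (intro sum.cong) auto
    have "vn 0 (H *\<^sub>v y) = (\<Sum>r\<in>{0..<j}. (cmod ((H *\<^sub>v y) $ r))\<^sup>2) + vn j (H *\<^sub>v y)"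
      using True Hc y by (intro vn_split) auto
    moreover have "vn 0 y = (\<Sum>r\<in>{0..<j}. (cmod (y $ r))\<^sup>2) + vn j y"
      using True y by (intro vn_split) auto
    ultimately show ?thesis using tot top by simp
  next
    case False then show ?thesis using Hc y unfolding vn_def by simp
  qed
qed

definition G :: "nat \<Rightarrow> complex mat list \<Rightarrow> complex mat" where
  "G p Hs = ctrans (foldr (*) Hs (1\<^sub>m p))"

lemma foldr_carrier: fixes Hs :: "complex mat list" shows "\<forall>H\<in>set Hs. H \<in> carrier_mat p p \<Longrightarrow> X \<in> carrier_mat p q \<Longrightarrow> foldr (*) Hs X \<in> carrier_mat p q"
  by (induction Hs) auto

lemma foldr_mult: fixes Hs :: "complex mat list" shows "\<forall>H\<in>set Hs. H \<in> carrier_mat p p \<Longrightarrow> X \<in> carrier_mat p q \<Longrightarrow> foldr (*) Hs X = foldr (*) Hs (1\<^sub>m p) * X"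
proof (induction Hs)
  case Nil
  then have "X = 1\<^sub>m p * X" using left_mult_one_mat by metis
  then show ?case by simp
next
  case (Cons H Hs)
  have "foldr (*) (H # Hs) X = H * (foldr (*) Hs (1\<^sub>m p) * X)" using Cons by simp
  also have "\<dots> = (H * foldr (*) Hs (1\<^sub>m p)) * X"
    using Cons foldr_carrier[of Hs p "1\<^sub>m p" p] by (intro assoc_mult_mat[symmetric]) auto
  finally show ?case by simp
qed

lemma G_carrier: "\<forall>H\<in>set Hs. H \<in> carrier_mat p p \<Longrightarrow> G p Hs \<in> carrier_mat p p"
  unfolding G_def using foldr_carrier[of Hs p "1\<^sub>m p" p] by auto

lemma G_Nil[simp]: "G p [] = 1\<^sub>m p" unfolding G_def by simp

lemma G_snoc: assumes "\<forall>H\<in>set Hs. H \<in> carrier_mat p p" "reflok p H"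
  shows "G p (Hs @ [H]) = H * G p Hs"
proof -
  have Hc: "H \<in> carrier_mat p p" "ctrans H = H" using assms(2) unfolding reflok_def by auto
  have "foldr (*) (Hs @ [H]) (1\<^sub>m p) = foldr (*) Hs H" using Hc by simp
  also have "\<dots> = foldr (*) Hs (1\<^sub>m p) * H" using foldr_mult[OF assms(1) Hc(1)] .
  finally show ?thesis unfolding G_def using Hc foldr_carrier[of Hs p "1\<^sub>m p" p] assms(1)
    by (simp add: ctrans_mult[of _ p p _ p])
qed

lemma G_vn: assumes "\<forall>H\<in>set Hs. reflok p H" "y \<in> carrier_vec p"
  shows "vn 0 (G p Hs *\<^sub>v y) = vn 0 y"
  using assms
proof (induction Hs rule: rev_induct)
  case Nil then show ?case by simp
next
  case (snoc H Hs)
  have c: "\<forall>H\<in>set Hs. H \<in> carrier_mat p p" using snoc.prems unfolding reflok_def by auto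
  have r: "reflok p H" using snoc.prems by auto
  then have Hc: "H \<in> carrier_mat p p" "ctrans H * H = 1\<^sub>m p" unfolding reflok_def by auto
  have "G p (Hs @ [H]) *\<^sub>v y = H *\<^sub>v (G p Hs *\<^sub>v y)"
    unfolding G_snoc[OF c r] using Hc G_carrier[OF c] snoc.prems by (intro assoc_mult_mat_vec) auto
  moreover have "vn 0 (H *\<^sub>v (G p Hs *\<^sub>v y)) = vn 0 (G p Hs *\<^sub>v y)"
    using Hc G_carrier[OF c] snoc.prems by (intro unitary_vn) auto
  ultimately show ?case using snoc by simp
qed

lemma swap_cols_carrier[simp]: "dim_row (swap_cols R i j) = dim_row R" "dim_col (swap_cols R i j) = dim_col R"
  unfolding swap_cols_def by auto

lemma swap_cols_col: "i < dim_col R \<Longrightarrow> j < dim_col R \<Longrightarrow> c < dim_col R \<Longrightarrow>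
   col (swap_cols R i j) c = col R (Transposition.transpose i j c)"
  unfolding swap_cols_def by (rule eq_vecI) (auto simp: transpose_def)


lemma col_index: "M \<in> carrier_mat p q \<Longrightarrow> r < p \<Longrightarrow> c < q \<Longrightarrow> col M c $ r = M $$ (r,c)"
  by auto

lemma transpose_lt: "i < q \<Longrightarrow> j < q \<Longrightarrow> c < q \<Longrightarrow> Transposition.transpose i j c < q"
  by (auto simp: transpose_def)

lemma gb_inv:
  assumes "gb_run B i f Hs R"
  shows "length Hs = i \<and> i \<le> min (dim_row B) (dim_col B) \<and> R \<in> carrier_mat (dim_row B) (dim_col B) \<and>
    f permutes {..<dim_col B} \<and>
    (\<forall>H\<in>set Hs. reflok (dim_row B) H) \<and>
    (\<forall>j<dim_col B. col R j = G (dim_row B) Hs *\<^sub>v col B (f j)) \<and>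
    (\<forall>j<i. \<forall>r. j < r \<and> r < dim_row B \<longrightarrow> R $$ (r,j) = 0) \<and>
    (\<forall>j<i. \<forall>j'. j \<le> j' \<and> j' < dim_col B \<longrightarrow> subcol_norm R j j' \<le> cmod (R $$ (j,j))) \<and>
    (\<forall>j. Suc j < i \<longrightarrow> cmod (R $$ (Suc j, Suc j)) \<le> cmod (R $$ (j,j))) \<and>
    (\<forall>c\<le>i. \<exists>f' R'. gb_run B c f' (take c Hs) R' \<and> (\<forall>l<c. f' l = f l) \<and> (\<forall>l<c. col R' l = col R l))"
  using assms
proof induction
  case gb_init
  have "\<forall>j<dim_col B. col B j = 1\<^sub>m (dim_row B) *\<^sub>v col B j"
    by (auto intro!: one_mult_mat_vec[symmetric])
  moreover have "\<exists>f' R'. gb_run B 0 f' [] R'" using gb_run.gb_init by blast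
  ultimately show ?case using permutes_id[of "{..<dim_col B}", unfolded id_def] by auto
next
  case (gb_step i f Hs R jmax H)
  define p where "p = dim_row B"
  define q where "q = dim_col B"
  define T where "T = Transposition.transpose i jmax"
  define S where "S = swap_cols R i jmax"
  note IH = gb_step.IH[folded p_def q_def]
  have len: "length Hs = i" and Rc: "R \<in> carrier_mat p q" and fperm: "f permutes {..<q}"
    and refl: "\<forall>H\<in>set Hs. reflok p H"
    and colR: "\<forall>j<q. col R j = G p Hs *\<^sub>v col B (f j)"
    and tri: "\<forall>j<i. \<forall>r. j < r \<and> r < p \<longrightarrow> R $$ (r,j) = 0"
    and dom: "\<forall>j<i. \<forall>j'. j \<le> j' \<and> j' < q \<longrightarrow> subcol_norm R j j' \<le> cmod (R $$ (j,j))"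
    and mono: "\<forall>j. Suc j < i \<longrightarrow> cmod (R $$ (Suc j, Suc j)) \<le> cmod (R $$ (j,j))"
    and pre: "\<forall>c\<le>i. \<exists>f' R'. gb_run B c f' (take c Hs) R' \<and> (\<forall>l<c. f' l = f l) \<and> (\<forall>l<c. col R' l = col R l)"
    using IH by - ((elim conjE)?, assumption)+
  have ip: "i < p" and iq: "i < q" using gb_step.hyps(2) p_def q_def by auto
  have ij: "i \<le> jmax" and jq: "jmax < q" using gb_step.hyps(3,4) q_def by auto
  have maxj: "\<forall>j. i \<le> j \<and> j < q \<longrightarrow> subcol_norm R i j \<le> subcol_norm R i jmax"
    using gb_step.hyps(5) q_def by auto
  have hH: "householder p i (col S i) H" using gb_step.hyps(6) p_def S_def by simp
  have Hr: "reflok p H" by (rule householder_reflok[OF hH])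
  then have Hc: "H \<in> carrier_mat p p" unfolding reflok_def by auto
  have Sc: "S \<in> carrier_mat p q" using Rc unfolding S_def by auto
  have colS: "\<forall>c<q. col S c = col R (T c)"
    using Rc iq jq unfolding S_def T_def by (auto intro!: swap_cols_col)
  have Tq: "\<forall>c<q. T c < q" using iq jq unfolding T_def by (auto intro: transpose_lt)
  have Tid: "\<forall>c<i. T c = c" using ij unfolding T_def by auto
  have colR': "\<forall>c<q. col (H * S) c = H *\<^sub>v col S c" using Hc Sc by auto
  have R'c: "H * S \<in> carrier_mat p q" using Hc Sc by auto
  have ent: "\<forall>r<p. \<forall>c<q. (H * S) $$ (r,c) = (H *\<^sub>v col S c) $ r" using Hc Sc by auto
  have fixcol: "\<forall>c<i. col (H * S) c = col R c"
  proof (intro allI impI)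
    fix c assume c: "c < i"
    then have cq: "c < q" using iq by simp
    have "col (H * S) c = H *\<^sub>v col R c" using colR' colS Tid c cq by simp
    also have "\<dots> = col R c"
      using c cq Rc by (intro householder_fix[OF hH]) (auto simp: tri)
    finally show "col (H * S) c = col R c" .
  qed
  have diagfix: "\<forall>c<i. (H * S) $$ (c,c) = R $$ (c,c)"
  proof (intro allI impI)
    fix c assume c: "c < i"
    have "(H * S) $$ (c,c) = col (H * S) c $ c" using c ip iq R'c by (simp add: col_index)
    also have "\<dots> = col R c $ c" using fixcol c by simp
    also have "\<dots> = R $$ (c,c)" using c ip iq Rc by (simp add: col_index)
    finally show "(H * S) $$ (c,c) = R $$ (c,c)" .
  qed
  have colSi: "col S i = col R jmax" using colS iq unfolding T_def by simp
  have diag_i: "cmod ((H * S) $$ (i,i)) = subcol_norm R i jmax"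
  proof -
    have "cmod ((H * S) $$ (i,i)) = cmod ((H *\<^sub>v col S i) $ i)" using ent ip iq by simp
    also have "\<dots> = sqrt (\<Sum>l\<in>{i..<p}. (cmod (col S i $ l))\<^sup>2)"
      using hH unfolding householder_def by blast
    also have "\<dots> = sqrt (vn i (col R jmax))" unfolding colSi vn_def using Rc by simp
    also have "\<dots> = subcol_norm R i jmax" using subcol_vn[of jmax R i] jq Rc by simp
    finally show ?thesis .
  qed
  have sub': "\<forall>a\<le>i. \<forall>c<q. subcol_norm (H * S) a c = subcol_norm R a (T c)"
  proof (intro allI impI)
    fix a c assume a: "a \<le> i" and c: "c < q"
    have "subcol_norm (H * S) a c = sqrt (vn a (col (H * S) c))" using subcol_vn[of c "H * S" a] c R'c Sc by simp
    also have "\<dots> = sqrt (vn a (col S c))" using colR' c Sc a by (simp add: householder_tail[OF hH])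
    also have "\<dots> = sqrt (vn a (col R (T c)))" using colS c by simp
    also have "\<dots> = subcol_norm R a (T c)" using subcol_vn[of "T c" R a] Tq c Rc by simp
    finally show "subcol_norm (H * S) a c = subcol_norm R a (T c)" .
  qed
  have Tperm: "T permutes {..<q}" unfolding T_def using iq jq by (intro permutes_swap_id) auto
  have fT: "f \<circ> T permutes {..<q}" by (rule permutes_compose[OF Tperm fperm])
  have refl': "\<forall>H'\<in>set (Hs @ [H]). reflok p H'" using refl Hr by auto
  have reflc: "\<forall>H'\<in>set Hs. H' \<in> carrier_mat p p" using refl unfolding reflok_def by auto
  have c6: "\<forall>j<q. col (H * S) j = G p (Hs @ [H]) *\<^sub>v col B ((f \<circ> T) j)"
  proof (intro allI impI)
    fix j assume j: "j < q"
    have fTj: "f (T j) < q" using permutes_in_image[OF fperm] Tq j by auto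
    have "G p (Hs @ [H]) *\<^sub>v col B ((f \<circ> T) j) = (H * G p Hs) *\<^sub>v col B (f (T j))"
      using G_snoc[OF reflc Hr] by simp
    also have "\<dots> = H *\<^sub>v (G p Hs *\<^sub>v col B (f (T j)))"
      using Hc G_carrier[OF reflc] fTj by (intro assoc_mult_mat_vec) (auto simp: p_def q_def)
    also have "\<dots> = H *\<^sub>v col S j" using colR colS Tq j by simp
    finally show "col (H * S) j = G p (Hs @ [H]) *\<^sub>v col B ((f \<circ> T) j)" using colR' j by simp
  qed
  have c7: "\<forall>j<Suc i. \<forall>r. j < r \<and> r < p \<longrightarrow> (H * S) $$ (r,j) = 0"
  proof (intro allI impI)
    fix j r assume j: "j < Suc i" and r: "j < r \<and> r < p"
    show "(H * S) $$ (r,j) = 0"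
    proof (cases "j < i")
      case True
      have "(H * S) $$ (r,j) = col (H * S) j $ r" using r True iq R'c by (simp add: col_index)
      also have "\<dots> = R $$ (r,j)" using fixcol True r iq Rc by (simp add: col_index)
      finally show ?thesis using tri True r by simp
    next
      case False
      then have "j = i" using j by simp
      then show ?thesis using ent r iq hH unfolding householder_def by auto
    qed
  qed
  have c8: "\<forall>j<Suc i. \<forall>j'. j \<le> j' \<and> j' < q \<longrightarrow> subcol_norm (H * S) j j' \<le> cmod ((H * S) $$ (j,j))"
  proof (intro allI impI)
    fix j j' assume j: "j < Suc i" and j': "j \<le> j' \<and> j' < q"
    have Tj': "j \<le> T j'" "T j' < q" "i \<le> j' \<Longrightarrow> i \<le> T j'"
      using j j' ij Tq unfolding T_def by (auto simp: transpose_def)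
    have e: "subcol_norm (H * S) j j' = subcol_norm R j (T j')" using sub' j j' by simp
    show "subcol_norm (H * S) j j' \<le> cmod ((H * S) $$ (j,j))"
    proof (cases "j < i")
      case True
      then show ?thesis using e dom Tj' diagfix by simp
    next
      case False
      then have "j = i" using j by simp
      then show ?thesis using e maxj Tj' diag_i j' by simp
    qed
  qed
  have c9: "\<forall>j. Suc j < Suc i \<longrightarrow> cmod ((H * S) $$ (Suc j, Suc j)) \<le> cmod ((H * S) $$ (j,j))"
  proof (intro allI impI)
    fix j assume j: "Suc j < Suc i"
    show "cmod ((H * S) $$ (Suc j, Suc j)) \<le> cmod ((H * S) $$ (j,j))"
    proof (cases "Suc j < i")
      case True
      then show ?thesis using mono diagfix by simp
    next
      case False
      then have ji: "Suc j = i" using j by simp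
      have "cmod ((H * S) $$ (Suc j, Suc j)) = subcol_norm R i jmax" using diag_i ji by simp
      also have "\<dots> \<le> subcol_norm R j jmax" using ji by (intro subcol_mono) simp
      also have "\<dots> \<le> cmod (R $$ (j,j))" using dom ji ij jq by simp
      also have "\<dots> = cmod ((H * S) $$ (j,j))" using diagfix ji by simp
      finally show ?thesis .
    qed
  qed
  have c10: "\<forall>c\<le>Suc i. \<exists>f' R'. gb_run B c f' (take c (Hs @ [H])) R' \<and> (\<forall>l<c. f' l = (f \<circ> T) l) \<and> (\<forall>l<c. col R' l = col (H * S) l)"
  proof (intro allI impI)
    fix c assume c: "c \<le> Suc i"
    show "\<exists>f' R'. gb_run B c f' (take c (Hs @ [H])) R' \<and> (\<forall>l<c. f' l = (f \<circ> T) l) \<and> (\<forall>l<c. col R' l = col (H * S) l)"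
    proof (cases "c = Suc i")
      case True
      have "gb_run B (Suc i) (f \<circ> T) (Hs @ [H]) (H * S)"
        unfolding T_def S_def by (rule gb_run.gb_step[OF gb_step.hyps])
      then show ?thesis using True len by (metis comp_apply order_refl take_all_iff length_append_singleton)
    next
      case False
      then have ci: "c \<le> i" using c by simp
      then obtain f' R' where *: "gb_run B c f' (take c Hs) R'" "\<forall>l<c. f' l = f l" "\<forall>l<c. col R' l = col R l"
        using pre by blast
      have "take c (Hs @ [H]) = take c Hs" using ci len by simp
      moreover have "\<forall>l<c. f' l = (f \<circ> T) l" using *(2) Tid ci by simp
      moreover have "\<forall>l<c. col R' l = col (H * S) l" using *(3) fixcol ci by simp
      ultimately show ?thesis using *(1) by metis
    qed
  qed
  show ?case
    unfolding p_def[symmetric] q_def[symmetric] T_def[symmetric] S_def[symmetric]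
  proof (intro conjI)
    show "length (Hs @ [H]) = Suc i" using len by simp
    show "Suc i \<le> min p q" using ip iq by simp
  qed (fact R'c fT refl' c6 c7 c8 c9 c10)+
qed


lemma perm_mat_carrier[simp]: "perm_mat n g \<in> carrier_mat n n"
  unfolding perm_mat_def by auto

lemma mult_perm_mat_index:
  assumes X: "X \<in> carrier_mat m n" and i: "i < m" and j: "j < n" and g: "g j < n"
  shows "(X * perm_mat n g) $$ (i,j) = X $$ (i, g j)"
proof -
  have "(X * perm_mat n g) $$ (i,j) = (\<Sum>k\<in>{0..<n}. X $$ (i,k) * (if k = g j then 1 else 0))"
    using X i j unfolding perm_mat_def by (auto simp: scalar_prod_def intro!: sum.cong)
  also have "\<dots> = (\<Sum>k\<in>{0..<n}. (if k = g j then X $$ (i,k) else 0))"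
    by (intro sum.cong) auto
  also have "\<dots> = X $$ (i, g j)" using g by simp
  finally show ?thesis .
qed

lemma blockdiag_carrier[simp]: "M \<in> carrier_mat p p \<Longrightarrow> blockdiag_id s M \<in> carrier_mat (s+p) (s+p)"
  unfolding blockdiag_id_def by auto

lemma ctrans_blockdiag: assumes "M \<in> carrier_mat p p"
  shows "ctrans (blockdiag_id s M) = blockdiag_id s (ctrans M)"
  using assms unfolding blockdiag_id_def by (intro eq_matI) auto

lemma blockdiag_mult_index:
  assumes M: "M \<in> carrier_mat p p" and X: "X \<in> carrier_mat (s+p) n" and i: "i < s+p" and j: "j < n"
  shows "(blockdiag_id s M * X) $$ (i,j) =
    (if i < s then X $$ (i,j) else (M *\<^sub>v vec p (\<lambda>r. X $$ (s+r, j))) $ (i-s))"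
proof -
  define BD where "BD = blockdiag_id s M"
  have BDc: "BD \<in> carrier_mat (s+p) (s+p)" using M unfolding BD_def by simp
  have BDe: "\<And>a c. a < s+p \<Longrightarrow> c < s+p \<Longrightarrow> BD $$ (a,c) = (if a < s \<and> c < s then (if a = c then 1 else 0)
             else if s \<le> a \<and> s \<le> c then M $$ (a - s, c - s) else 0)"
    using M unfolding BD_def blockdiag_id_def by auto
  have "(BD * X) $$ (i,j) = (\<Sum>k\<in>{0..<s+p}. BD $$ (i,k) * X $$ (k,j))"
    using BDc X i j by (auto simp: scalar_prod_def intro!: sum.cong)
  also have "\<dots> = (\<Sum>k\<in>{0..<s}. BD $$ (i,k) * X $$ (k,j)) + (\<Sum>k\<in>{s..<s+p}. BD $$ (i,k) * X $$ (k,j))"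
    by (simp add: sum.atLeastLessThan_concat)
  also have "(\<Sum>k\<in>{s..<s+p}. BD $$ (i,k) * X $$ (k,j)) = (\<Sum>r\<in>{0..<p}. BD $$ (i,r+s) * X $$ (r+s,j))"
    using sum.shift_bounds_nat_ivl[of "\<lambda>k. BD $$ (i,k) * X $$ (k,j)" 0 s p] by (simp add: add.commute)
  finally have e: "(BD * X) $$ (i,j) = (\<Sum>k\<in>{0..<s}. BD $$ (i,k) * X $$ (k,j)) + (\<Sum>r\<in>{0..<p}. BD $$ (i,r+s) * X $$ (r+s,j))" .
  show ?thesis
  proof (cases "i < s")
    case True
    have "(\<Sum>k\<in>{0..<s}. BD $$ (i,k) * X $$ (k,j)) = (\<Sum>k\<in>{0..<s}. if k = i then X $$ (k,j) else 0)"
      using True i by (intro sum.cong) (auto simp: BDe)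
    also have "\<dots> = X $$ (i,j)" using True by simp
    finally have 1: "(\<Sum>k\<in>{0..<s}. BD $$ (i,k) * X $$ (k,j)) = X $$ (i,j)" .
    have 2: "(\<Sum>r\<in>{0..<p}. BD $$ (i,r+s) * X $$ (r+s,j)) = 0"
      using True i by (intro sum.neutral) (auto simp: BDe)
    show ?thesis using e 1 2 True unfolding BD_def by simp
  next
    case False
    have 1: "(\<Sum>k\<in>{0..<s}. BD $$ (i,k) * X $$ (k,j)) = 0"
      using False i by (intro sum.neutral) (auto simp: BDe)
    have 2: "(\<Sum>r\<in>{0..<p}. BD $$ (i,r+s) * X $$ (r+s,j)) = (\<Sum>r\<in>{0..<p}. M $$ (i-s, r) * X $$ (s+r,j))"
      using False i by (intro sum.cong) (auto simp: BDe add.commute)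
    have 3: "(M *\<^sub>v vec p (\<lambda>r. X $$ (s+r, j))) $ (i-s) = (\<Sum>r\<in>{0..<p}. M $$ (i-s, r) * X $$ (s+r,j))"
      using False i M by (auto simp: scalar_prod_def intro!: sum.cong)
    show ?thesis using e 1 2 3 False unfolding BD_def by simp
  qed
qed

lemma sum_shift_s: fixes g :: "nat \<Rightarrow> real" shows "s \<le> a \<Longrightarrow> (\<Sum>r\<in>{a..<s+p}. g r) = (\<Sum>r\<in>{a-s..<p}. g (s+r))"
  using sum.shift_bounds_nat_ivl[of g "a-s" s p] by (simp add: add.commute)

lemma chain_mono:
  fixes a :: "nat \<Rightarrow> real"
  assumes "\<forall>j. Suc j < d \<longrightarrow> a (Suc j) \<le> a j" "l \<le> l'" "l' < d"
  shows "a l' \<le> a l"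
  using assms(2,3)
proof (induction l')
  case 0 then show ?case by simp
next
  case (Suc l')
  show ?case
  proof (cases "l = Suc l'")
    case False
    then have "a l' \<le> a l" using Suc by simp
    moreover have "a (Suc l') \<le> a l'" using assms(1) Suc by simp
    ultimately show ?thesis by simp
  qed simp
qed

theorem lemma3p1:
  fixes A Q Pi B Rh Qh :: "complex mat" and m n k s t b d c :: nat
    and p \<sigma> f ph :: "nat \<Rightarrow> nat" and Hs :: "complex mat list"
    and \<gamma> :: "nat \<Rightarrow> real" and \<mu> \<delta> :: real
  assumes A: "A \<in> carrier_mat m n"
    and k: "1 \<le> k" "k \<le> min m n"
    and st: "s < k" "1 \<le> t" "s + t \<le> n"
    and Q: "unitary_mat m Q"
    and Pi: "p permutes {..<n}" "Pi = perm_mat n p"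
    and GBs: "GB_form s (ctrans Q * A * Pi)"
    and gamma: "\<forall>j. \<gamma> j = (subcol_norm (ctrans Q * A * Pi) s j)\<^sup>2"
    and mu: "\<mu> = Max (insert 0 ((\<lambda>j. (subcol_norm (A * Pi) 0 j)\<^sup>2) ` {s+t..<n}))"
    and maxgam: "Max (\<gamma> ` {s..<s+t}) \<ge> \<mu>"
    and b: "1 \<le> b" "b \<le> t"
    and sigma: "\<sigma> permutes {..<t}"
      "\<forall>l1 l2. l1 \<le> l2 \<and> l2 < t \<longrightarrow> \<gamma> (s + \<sigma> l2) \<le> \<gamma> (s + \<sigma> l1)"
    and delta: "\<delta> = Max (insert 0 ((\<lambda>l. \<gamma> (s + \<sigma> l)) ` {b..<t}))"
    and B: "B = mat (m - s) b (\<lambda>(i,l). (ctrans Q * A * Pi) $$ (s + i, s + \<sigma> l))"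
    and d: "d = min (m - s) b"
    and run: "gb_run B d f Hs Rh"
    and c: "c = Max {i\<in>{1..d}. (cmod (Rh $$ (i-1, i-1)))\<^sup>2 \<ge> max \<delta> \<mu>}"
    and ph: "ph permutes {s..<s+t}" "\<forall>l<b. ph (s + l) = s + \<sigma> (f l)"
    and Qh: "Qh = blockdiag_id s (foldr (*) (take c Hs) (1\<^sub>m (m - s)))"
  shows "GB_form (s + c) (ctrans (Q * Qh) * A * (Pi * perm_mat n ph))"
  proof -
  define R0 where "R0 = ctrans Q * A * Pi"
  define p where "p = m - s"
  define P where "P = perm_mat n ph"
  define Gc where "Gc = G p (take c Hs)"
  define Mc where "Mc = foldr (*) (take c Hs) (1\<^sub>m p)"
  define low where "low = (\<lambda>j'. vec p (\<lambda>r. R0 $$ (s+r, j')))"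
  define R where "R = ctrans (Q * Qh) * A * (Pi * P)"
  have sm: "s < m" using k st by simp
  have mp: "m = s + p" using sm unfolding p_def by simp
  have p1: "1 \<le> p" using sm unfolding p_def by simp
  have Qc: "Q \<in> carrier_mat m m" and QQ: "ctrans Q * Q = 1\<^sub>m m" using Q unfolding unitary_mat_def by auto
  have Pic: "Pi \<in> carrier_mat n n" using Pi unfolding perm_mat_def by auto
  have R0c: "R0 \<in> carrier_mat m n" unfolding R0_def using Qc A Pic by auto
  have Bc: "B \<in> carrier_mat p b" unfolding B p_def by auto
  have dpos: "1 \<le> d" using p1 b unfolding d p_def by simp
  have ph_lt: "\<forall>j<n. ph j < n"
  proof (intro allI impI)
    fix j assume j: "j < n"
    show "ph j < n"
    proof (cases "j \<in> {s..<s+t}")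
      case True
      then have "ph j \<in> {s..<s+t}" using permutes_in_image[OF ph(1)] by blast
      then show ?thesis using st by simp
    next
      case False then show ?thesis using permutes_not_in[OF ph(1)] j by simp
    qed
  qed
  have inv: "length Hs = d \<and> d \<le> min p b \<and> Rh \<in> carrier_mat p b \<and> f permutes {..<b} \<and>
    (\<forall>H\<in>set Hs. reflok p H) \<and>
    (\<forall>j<b. col Rh j = G p Hs *\<^sub>v col B (f j)) \<and>
    (\<forall>j<d. \<forall>r. j < r \<and> r < p \<longrightarrow> Rh $$ (r,j) = 0) \<and>
    (\<forall>j<d. \<forall>j'. j \<le> j' \<and> j' < b \<longrightarrow> subcol_norm Rh j j' \<le> cmod (Rh $$ (j,j))) \<and>
    (\<forall>j. Suc j < d \<longrightarrow> cmod (Rh $$ (Suc j, Suc j)) \<le> cmod (Rh $$ (j,j))) \<and>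
    (\<forall>c\<le>d. \<exists>f' R'. gb_run B c f' (take c Hs) R' \<and> (\<forall>l<c. f' l = f l) \<and> (\<forall>l<c. col R' l = col Rh l))"
    using gb_inv[OF run] Bc by auto
  have lenHs: "length Hs = d" and Rhc: "Rh \<in> carrier_mat p b" and fperm: "f permutes {..<b}"
    and reflHs: "\<forall>H\<in>set Hs. reflok p H"
    and colRh: "\<forall>j<b. col Rh j = G p Hs *\<^sub>v col B (f j)"
    and domRh: "\<forall>j<d. \<forall>j'. j \<le> j' \<and> j' < b \<longrightarrow> subcol_norm Rh j j' \<le> cmod (Rh $$ (j,j))"
    and monoRh: "\<forall>j. Suc j < d \<longrightarrow> cmod (Rh $$ (Suc j, Suc j)) \<le> cmod (Rh $$ (j,j))"
    and preRh: "\<forall>c\<le>d. \<exists>f' R'. gb_run B c f' (take c Hs) R' \<and> (\<forall>l<c. f' l = f l) \<and> (\<forall>l<c. col R' l = col Rh l)"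
    using inv by - ((elim conjE)?, assumption)+
  have dp: "d \<le> p" and db: "d \<le> b" using d p_def by auto
  have colB: "\<forall>l<b. col B l = low (s + \<sigma> l)"
    unfolding B low_def R0_def p_def by (auto intro!: eq_vecI)
  have low_c: "\<And>j'. low j' \<in> carrier_vec p" unfolding low_def by auto
  have low_vn: "\<And>a j'. a \<le> p \<Longrightarrow> subcol_norm R0 (s+a) j' = sqrt (vn a (low j'))"
  proof -
    fix a j' assume a: "a \<le> p"
    have "(\<Sum>r\<in>{s+a..<dim_row R0}. (cmod (R0 $$ (r,j')))\<^sup>2) = (\<Sum>r\<in>{a..<p}. (cmod (R0 $$ (s+r,j')))\<^sup>2)"
      using R0c mp sum_shift_s[of s "s+a" "\<lambda>r. (cmod (R0 $$ (r,j')))\<^sup>2" p] by simp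
    also have "\<dots> = vn a (low j')" unfolding vn_def low_def by (intro sum.cong) auto
    finally show "subcol_norm R0 (s+a) j' = sqrt (vn a (low j'))" unfolding subcol_norm_def by simp
  qed
  have gam_low: "\<And>j'. \<gamma> j' = vn 0 (low j')"
    using gamma[folded R0_def] low_vn[of 0] vn_nonneg by simp
  have gam_nonneg: "\<And>j'. 0 \<le> \<gamma> j'" using gam_low vn_nonneg by simp
  have sig_img: "\<sigma> ` {..<t} = {..<t}" by (rule permutes_image[OF sigma(1)])
  have sig_lt: "\<And>l. l < t \<Longrightarrow> \<sigma> l < t" using permutes_in_image[OF sigma(1)] by auto
  have f_lt: "\<And>l. l < b \<Longrightarrow> f l < b" using permutes_in_image[OF fperm] by auto
  have g0_delta: "\<delta> \<le> \<gamma> (s + \<sigma> 0)"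
    unfolding delta using gam_nonneg sigma(2) st by (subst Max_le_iff) auto
  have g0_mu: "\<mu> \<le> \<gamma> (s + \<sigma> 0)"
  proof -
    have "Max (\<gamma> ` {s..<s+t}) \<le> \<gamma> (s + \<sigma> 0)"
    proof (subst Max_le_iff)
      show "\<forall>a\<in>\<gamma> ` {s..<s+t}. a \<le> \<gamma> (s + \<sigma> 0)"
      proof
        fix a assume "a \<in> \<gamma> ` {s..<s+t}"
        then obtain j where j: "j \<in> {s..<s+t}" "a = \<gamma> j" by blast
        then have "j - s \<in> \<sigma> ` {..<t}" using sig_img by auto
        then obtain l where l: "l < t" "j - s = \<sigma> l" by auto
        then have "j = s + \<sigma> l" using j by auto
        then show "a \<le> \<gamma> (s + \<sigma> 0)" using j l sigma(2) by auto
      qed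
    qed (use st in auto)
    then show ?thesis using maxgam by simp
  qed
  have first: "max \<delta> \<mu> \<le> (cmod (Rh $$ (0,0)))\<^sup>2"
  proof -
    have "0 \<in> f ` {..<b}" using permutes_image[OF fperm] b by auto
    then obtain j0 where j0: "j0 < b" "f j0 = 0" by auto
    have "subcol_norm Rh 0 j0 \<le> cmod (Rh $$ (0,0))" using domRh dpos j0 by auto
    moreover have "subcol_norm Rh 0 j0 = sqrt (vn 0 (col Rh j0))" using subcol_vn[of j0 Rh 0] Rhc j0 by simp
    moreover have "vn 0 (col Rh j0) = vn 0 (col B 0)"
      using colRh j0 G_vn[OF reflHs] col_carrier_vec[of 0 b B p] Bc b(1) by simp
    moreover have "vn 0 (col B 0) = \<gamma> (s + \<sigma> 0)" using colB gam_low b by simp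
    ultimately have "sqrt (\<gamma> (s + \<sigma> 0)) \<le> cmod (Rh $$ (0,0))" by simp
    then have "\<gamma> (s + \<sigma> 0) \<le> (cmod (Rh $$ (0,0)))\<^sup>2"
      using gam_nonneg by (metis real_sqrt_le_iff real_sqrt_unique norm_ge_zero)
    then show ?thesis using g0_delta g0_mu by simp
  qed
  define Sset where "Sset = {i\<in>{1..d}. (cmod (Rh $$ (i-1, i-1)))\<^sup>2 \<ge> max \<delta> \<mu>}"
  have Sfin: "finite Sset" unfolding Sset_def by simp
  have S1: "1 \<in> Sset" unfolding Sset_def using first dpos by simp
  have cS: "c \<in> Sset" unfolding c Sset_def[symmetric] using Sfin S1 by (intro Max_in) auto
  have c1: "1 \<le> c" and cd: "c \<le> d" and cpiv: "max \<delta> \<mu> \<le> (cmod (Rh $$ (c-1, c-1)))\<^sup>2"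
    using cS unfolding Sset_def by auto
  have piv: "\<And>l. l < c \<Longrightarrow> max \<delta> \<mu> \<le> (cmod (Rh $$ (l,l)))\<^sup>2"
  proof -
    fix l assume l: "l < c"
    have "cmod (Rh $$ (c-1, c-1)) \<le> cmod (Rh $$ (l,l))"
      using chain_mono[of d "\<lambda>j. cmod (Rh $$ (j,j))" l "c-1"] monoRh l cd c1 by simp
    then have "(cmod (Rh $$ (c-1, c-1)))\<^sup>2 \<le> (cmod (Rh $$ (l,l)))\<^sup>2"
      by (simp add: power_mono)
    then show "max \<delta> \<mu> \<le> (cmod (Rh $$ (l,l)))\<^sup>2" using cpiv by linarith
  qed
  obtain f' R' where run': "gb_run B c f' (take c Hs) R'" and ff': "\<forall>l<c. f' l = f l"
    and colR'Rh: "\<forall>l<c. col R' l = col Rh l"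
    using preRh cd by blast
  have inv': "length (take c Hs) = c \<and> c \<le> min p b \<and> R' \<in> carrier_mat p b \<and> f' permutes {..<b} \<and>
    (\<forall>H\<in>set (take c Hs). reflok p H) \<and>
    (\<forall>j<b. col R' j = G p (take c Hs) *\<^sub>v col B (f' j)) \<and>
    (\<forall>j<c. \<forall>r. j < r \<and> r < p \<longrightarrow> R' $$ (r,j) = 0) \<and>
    (\<forall>j<c. \<forall>j'. j \<le> j' \<and> j' < b \<longrightarrow> subcol_norm R' j j' \<le> cmod (R' $$ (j,j))) \<and>
    (\<forall>j. Suc j < c \<longrightarrow> cmod (R' $$ (Suc j, Suc j)) \<le> cmod (R' $$ (j,j))) \<and>
    (\<forall>c'\<le>c. \<exists>f'' R''. gb_run B c' f'' (take c' (take c Hs)) R'' \<and> (\<forall>l<c'. f'' l = f' l) \<and> (\<forall>l<c'. col R'' l = col R' l))"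
    using gb_inv[OF run'] Bc by auto
  have R'c: "R' \<in> carrier_mat p b" and f'perm: "f' permutes {..<b}"
    and reflc: "\<forall>H\<in>set (take c Hs). reflok p H"
    and colR': "\<forall>j<b. col R' j = Gc *\<^sub>v col B (f' j)"
    and triR': "\<forall>j<c. \<forall>r. j < r \<and> r < p \<longrightarrow> R' $$ (r,j) = 0"
    and domR': "\<forall>j<c. \<forall>j'. j \<le> j' \<and> j' < b \<longrightarrow> subcol_norm R' j j' \<le> cmod (R' $$ (j,j))"
    unfolding Gc_def using inv' by - ((elim conjE)?, assumption)+
  have cp: "c \<le> p" and cb: "c \<le> b" using cd dp db by auto
  have diagR': "\<And>l. l < c \<Longrightarrow> R' $$ (l,l) = Rh $$ (l,l)"
  proof -
    fix l assume l: "l < c"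
    have "R' $$ (l,l) = col R' l $ l" using R'c l cp cb by (simp add: col_index)
    also have "\<dots> = col Rh l $ l" using colR'Rh l by simp
    also have "\<dots> = Rh $$ (l,l)" using Rhc l cp cb by (simp add: col_index)
    finally show "R' $$ (l,l) = Rh $$ (l,l)" .
  qed
  have fre: "\<And>l0 l. l0 < c \<Longrightarrow> l0 \<le> l \<Longrightarrow> l < b \<Longrightarrow> \<exists>l''. l0 \<le> l'' \<and> l'' < b \<and> f l = f' l''"
  proof -
    fix l0 l assume l0: "l0 < c" and l: "l0 \<le> l" "l < b"
    have "f l \<in> f' ` {..<b}" using permutes_image[OF f'perm] f_lt l by auto
    then obtain l'' where l'': "l'' < b" "f l = f' l''" by auto
    have "l0 \<le> l''"
    proof (rule ccontr)
      assume "\<not> l0 \<le> l''"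
      then have "l'' < c" using l0 by simp
      then have "f l = f l''" using l'' ff' by simp
      then have "l = l''" using permutes_inj[OF fperm] unfolding inj_def by blast
      then show False using \<open>\<not> l0 \<le> l''\<close> l by simp
    qed
    then show "\<exists>l''. l0 \<le> l'' \<and> l'' < b \<and> f l = f' l''" using l'' by blast
  qed
  have Hs_c: "\<forall>H\<in>set (take c Hs). H \<in> carrier_mat p p" using reflc unfolding reflok_def by auto
  have Mc_c: "Mc \<in> carrier_mat p p" unfolding Mc_def using foldr_carrier[OF Hs_c, of "1\<^sub>m p" p] by simp
  have Gc_eq: "Gc = ctrans Mc" unfolding Gc_def G_def Mc_def by simp
  have Gc_c: "Gc \<in> carrier_mat p p" using Mc_c Gc_eq by simp
  have Gvn: "\<And>y. y \<in> carrier_vec p \<Longrightarrow> vn 0 (Gc *\<^sub>v y) = vn 0 y"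
    unfolding Gc_def using G_vn[OF reflc] by simp
  have Qh_eq: "Qh = blockdiag_id s Mc" unfolding Qh Mc_def p_def by simp
  have Qhc: "Qh \<in> carrier_mat m m" using Qh_eq Mc_c mp by simp
  have cQh: "ctrans Qh = blockdiag_id s Gc" unfolding Qh_eq Gc_eq by (rule ctrans_blockdiag[OF Mc_c])
  have Pc: "P \<in> carrier_mat n n" unfolding P_def by simp
  have CQc: "ctrans Q \<in> carrier_mat m m" using Qc by simp
  have CQh_c: "ctrans Qh \<in> carrier_mat m m" using Qhc by simp
  have R0Pc: "R0 * P \<in> carrier_mat m n" using R0c Pc by simp
  have Req: "R = blockdiag_id s Gc * (R0 * P)"
  proof -
    have "R = (ctrans Qh * ctrans Q) * A * (Pi * P)"
      unfolding R_def using ctrans_mult[OF Qc Qhc] by simp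
    also have "\<dots> = ctrans Qh * (ctrans Q * A) * (Pi * P)"
      using CQh_c CQc A by simp
    also have "\<dots> = ctrans Qh * ((ctrans Q * A) * (Pi * P))"
      using CQh_c CQc A Pic Pc by (intro assoc_mult_mat[of _ m m _ n _ n]) auto
    also have "(ctrans Q * A) * (Pi * P) = R0 * P"
      unfolding R0_def using CQc A Pic Pc by (intro assoc_mult_mat[symmetric, of _ m n _ n _ n]) auto
    finally show ?thesis using cQh by simp
  qed
  have Rc: "R \<in> carrier_mat m n"
    using Req mult_carrier_mat[OF blockdiag_carrier[OF Gc_c, of s], of "R0 * P" n] R0Pc mp by simp
  have dimR: "dim_row R = m" "dim_col R = n" using Rc by auto
  have Rent: "\<And>i j. i < m \<Longrightarrow> j < n \<Longrightarrow>
      R $$ (i,j) = (if i < s then R0 $$ (i, ph j) else (Gc *\<^sub>v low (ph j)) $ (i-s))"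
  proof -
    fix i j assume i: "i < m" and j: "j < n"
    have X: "R0 * P \<in> carrier_mat (s+p) n" using R0Pc mp by simp
    have e: "R $$ (i,j) = (if i < s then (R0 * P) $$ (i,j) else (Gc *\<^sub>v vec p (\<lambda>r. (R0 * P) $$ (s+r, j))) $ (i-s))"
      unfolding Req using blockdiag_mult_index[OF Gc_c X, of i j] i j mp by simp
    have "vec p (\<lambda>r. (R0 * P) $$ (s+r, j)) = low (ph j)"
      unfolding low_def P_def using mult_perm_mat_index[OF R0c _ j] ph_lt j mp by (intro eq_vecI) auto
    moreover have "(R0 * P) $$ (i,j) = R0 $$ (i, ph j)"
      unfolding P_def using mult_perm_mat_index[OF R0c i j] ph_lt j by simp
    ultimately show "R $$ (i,j) = (if i < s then R0 $$ (i, ph j) else (Gc *\<^sub>v low (ph j)) $ (i-s))"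
      using e by simp
  qed
  have lowsum: "\<And>a j'. a \<le> p \<Longrightarrow> (\<Sum>r\<in>{s+a..<m}. (cmod (R0 $$ (r,j')))\<^sup>2) = vn a (low j')"
  proof -
    fix a j' assume a: "a \<le> p"
    have "(\<Sum>r\<in>{s+a..<m}. (cmod (R0 $$ (r,j')))\<^sup>2) = (\<Sum>r\<in>{a..<p}. (cmod (R0 $$ (s+r,j')))\<^sup>2)"
      using mp sum_shift_s[of s "s+a" "\<lambda>r. (cmod (R0 $$ (r,j')))\<^sup>2" p] by simp
    also have "\<dots> = vn a (low j')" unfolding vn_def low_def by (intro sum.cong) auto
    finally show "(\<Sum>r\<in>{s+a..<m}. (cmod (R0 $$ (r,j')))\<^sup>2) = vn a (low j')" .
  qed
  have Rsum: "\<And>a j. a \<le> p \<Longrightarrow> j < n \<Longrightarrow> (\<Sum>r\<in>{s+a..<m}. (cmod (R $$ (r,j)))\<^sup>2) = vn a (Gc *\<^sub>v low (ph j))"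
  proof -
    fix a j assume a: "a \<le> p" and j: "j < n"
    have "(\<Sum>r\<in>{s+a..<m}. (cmod (R $$ (r,j)))\<^sup>2) = (\<Sum>r\<in>{a..<p}. (cmod (R $$ (s+r,j)))\<^sup>2)"
      using mp sum_shift_s[of s "s+a" "\<lambda>r. (cmod (R $$ (r,j)))\<^sup>2" p] by simp
    also have "\<dots> = (\<Sum>r\<in>{a..<p}. (cmod ((Gc *\<^sub>v low (ph j)) $ r))\<^sup>2)"
      using Rent j mp by (intro sum.cong) auto
    also have "\<dots> = vn a (Gc *\<^sub>v low (ph j))" unfolding vn_def using Gc_c by simp
    finally show "(\<Sum>r\<in>{s+a..<m}. (cmod (R $$ (r,j)))\<^sup>2) = vn a (Gc *\<^sub>v low (ph j))" .
  qed
  have subR_hi: "\<And>a j. a \<le> p \<Longrightarrow> j < n \<Longrightarrow> subcol_norm R (s+a) j = sqrt (vn a (Gc *\<^sub>v low (ph j)))"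
    unfolding subcol_norm_def using Rsum dimR by simp
  have subR_lo: "\<And>i j. i \<le> s \<Longrightarrow> j < n \<Longrightarrow> subcol_norm R i j = subcol_norm R0 i (ph j)"
  proof -
    fix i j assume i: "i \<le> s" and j: "j < n"
    have "(\<Sum>r\<in>{i..<m}. (cmod (R $$ (r,j)))\<^sup>2) = (\<Sum>r\<in>{i..<s}. (cmod (R $$ (r,j)))\<^sup>2) + (\<Sum>r\<in>{s..<m}. (cmod (R $$ (r,j)))\<^sup>2)"
      using i sm by (simp add: sum.atLeastLessThan_concat)
    also have "(\<Sum>r\<in>{i..<s}. (cmod (R $$ (r,j)))\<^sup>2) = (\<Sum>r\<in>{i..<s}. (cmod (R0 $$ (r,ph j)))\<^sup>2)"
      using Rent j sm by (intro sum.cong) auto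
    also have "(\<Sum>r\<in>{s..<m}. (cmod (R $$ (r,j)))\<^sup>2) = vn 0 (low (ph j))"
      using Rsum[of 0 j] j Gvn low_c by simp
    also have "vn 0 (low (ph j)) = (\<Sum>r\<in>{s..<m}. (cmod (R0 $$ (r,ph j)))\<^sup>2)"
      using lowsum[of 0 "ph j"] by simp
    also have "(\<Sum>r\<in>{i..<s}. (cmod (R0 $$ (r,ph j)))\<^sup>2) + (\<Sum>r\<in>{s..<m}. (cmod (R0 $$ (r,ph j)))\<^sup>2)
        = (\<Sum>r\<in>{i..<m}. (cmod (R0 $$ (r,ph j)))\<^sup>2)"
      using i sm by (simp add: sum.atLeastLessThan_concat)
    finally show "subcol_norm R i j = subcol_norm R0 i (ph j)"
      unfolding subcol_norm_def using dimR R0c by simp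
  qed
  have QQ': "Q * ctrans Q = 1\<^sub>m m" by (rule mat_mult_left_right_inverse[OF CQc Qc QQ])
  have APc: "A * Pi \<in> carrier_mat m n" using A Pic by simp
  have R0_AP: "\<And>j. j < n \<Longrightarrow> subcol_norm R0 0 j = subcol_norm (A * Pi) 0 j"
  proof -
    fix j assume j: "j < n"
    have "R0 = ctrans Q * (A * Pi)" unfolding R0_def using CQc A Pic by simp
    then have "col R0 j = ctrans Q *\<^sub>v col (A * Pi) j" using col_mult2[OF CQc APc j] by simp
    then have "vn 0 (col R0 j) = vn 0 (col (A * Pi) j)"
      using unitary_vn[OF CQc] QQ' APc j by simp
    then show "subcol_norm R0 0 j = subcol_norm (A * Pi) 0 j"
      using subcol_vn[of j R0 0] subcol_vn[of j "A * Pi" 0] R0c APc Pic j by simp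
  qed
  have GB0: "\<forall>j<s. \<forall>i. j < i \<and> i < m \<longrightarrow> R0 $$ (i,j) = 0"
    and GB0d: "\<forall>i<s. cmod (R0 $$ (i,i)) = Max ((\<lambda>j. subcol_norm R0 i j) ` {i..<n})"
    using GBs R0c unfolding GB_form_def R0_def by auto
  have candcol: "\<And>l. l < b \<Longrightarrow> low (ph (s + l)) = col B (f l)"
    using ph(2) colB f_lt by simp
  have candR': "\<And>l. l < c \<Longrightarrow> Gc *\<^sub>v low (ph (s + l)) = col R' l"
    using candcol colR' ff' cb by simp
  have sqrt_le: "\<And>y x. 0 \<le> x \<Longrightarrow> y \<le> x\<^sup>2 \<Longrightarrow> sqrt y \<le> x"
  proof -
    fix y x :: real assume "0 \<le> x" "y \<le> x\<^sup>2"
    then show "sqrt y \<le> x" using real_sqrt_le_mono[of y "x\<^sup>2"] by simp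
  qed
  show ?thesis
    unfolding R_def[symmetric] P_def[symmetric] GB_form_def dimR
  proof (intro conjI allI impI)
    show "s + c \<le> min m n" using cp cb b st mp by simp
  next
    fix j i assume j: "j < s + c" and ji: "j < i \<and> i < m"
    have jn: "j < n" using j cb b st by simp
    show "R $$ (i,j) = 0"
    proof (cases "j < s")
      case True
      have phj: "ph j = j" using permutes_not_in[OF ph(1)] True by simp
      show ?thesis
      proof (cases "i < s")
        case True
        then show ?thesis using Rent[of i j] ji jn phj GB0 \<open>j < s\<close> by simp
      next
        case False
        have "low j = 0\<^sub>v p" unfolding low_def using GB0 True mp by (intro eq_vecI) auto
        moreover have "i - s < p" using ji mp False by arith
        ultimately show ?thesis using Rent[of i j] ji jn phj False Gc_c by (simp add: scalar_prod_def)
      qed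
    next
      case False
      define l where "l = j - s"
      have l: "l < c" "j = s + l" using False j unfolding l_def by auto
      have "R $$ (i,j) = (col R' l) $ (i - s)" using Rent[of i j] ji jn l candR' by simp
      also have "\<dots> = R' $$ (i - s, l)"
      proof -
        have "i - s < p" using ji mp l by arith
        moreover have "l < b" using l cb by simp
        ultimately show ?thesis by (rule col_index[OF R'c])
      qed
      also have "\<dots> = 0"
      proof -
        have "l < i - s" "i - s < p" using ji mp l by arith+
        then show ?thesis using triR' l by simp
      qed
      finally show ?thesis .
    qed
  next
    fix i assume i: "i < s + c"
    have "finite ((\<lambda>j. subcol_norm R i j) ` {i..<n})" by simp
    show "cmod (R $$ (i,i)) = Max ((\<lambda>j. subcol_norm R i j) ` {i..<n})"
    proof (cases "i < s")
      case True
      have in_: "i < n" using True st by simp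
      have phi: "ph i = i" using permutes_not_in[OF ph(1)] True by simp
      have "R $$ (i,i) = R0 $$ (i,i)" using Rent[of i i] True in_ sm phi by simp
      moreover have "(\<lambda>j. subcol_norm R i j) ` {i..<n} = (\<lambda>j. subcol_norm R0 i j) ` {i..<n}"
      proof -
        have "(\<lambda>j. subcol_norm R i j) ` {i..<n} = (\<lambda>j. subcol_norm R0 i (ph j)) ` {i..<n}"
          using subR_lo True by (intro image_cong) auto
        also have "\<dots> = (\<lambda>j. subcol_norm R0 i j) ` (ph ` {i..<n})" by (simp add: image_image)
        also have "ph ` {i..<n} = {i..<n}"
          using permutes_image[OF permutes_subset[OF ph(1)]] True st by auto
        finally show ?thesis .
      qed
      ultimately show ?thesis using GB0d True by simp
    next
      case False
      define l where "l = i - s"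
      have l: "l < c" "i = s + l" using False i unfolding l_def by auto
      have lp: "l < p" and lb: "l < b" using l cp cb by auto
      define x where "x = cmod (R' $$ (l,l))"
      have x0: "0 \<le> x" unfolding x_def by simp
      have xpiv: "max \<delta> \<mu> \<le> x\<^sup>2" unfolding x_def using piv[OF l(1)] diagR'[OF l(1)] by simp
      have Rii: "R $$ (i,i) = R' $$ (l,l)"
      proof -
        have "R $$ (i,i) = (Gc *\<^sub>v low (ph (s + l))) $ l" using Rent[of i i] l lp lb mp b(2) st by simp
        also have "\<dots> = R' $$ (l,l)" using candR'[OF l(1)] R'c lp lb by (simp add: col_index)
        finally show ?thesis .
      qed
      have bound: "\<And>j. i \<le> j \<Longrightarrow> j < n \<Longrightarrow> subcol_norm R i j \<le> x"
      proof -
        fix j assume ij: "i \<le> j" and jn: "j < n"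
        show "subcol_norm R i j \<le> x"
        proof (cases "j < s + b")
          case True
          define l' where "l' = j - s"
          have l': "l \<le> l'" "l' < b" "j = s + l'" using True ij l unfolding l'_def by auto
          obtain l'' where l'': "l \<le> l''" "l'' < b" "f l' = f' l''" using fre[OF l(1) l'(1,2)] by blast
          have "Gc *\<^sub>v low (ph j) = col R' l''" using candcol l' l'' colR' by simp
          then have "subcol_norm R i j = sqrt (vn l (col R' l''))" using subR_hi[of l j] l lp jn by simp
          also have "\<dots> = subcol_norm R' l l''" using subcol_vn[of l'' R' l] R'c l'' by simp
          also have "\<dots> \<le> x" unfolding x_def using domR' l l'' by simp
          finally show ?thesis .
        next
          case False
          have le0: "subcol_norm R i j \<le> subcol_norm R0 s (ph j)"
            using subcol_mono[of s i R j] subR_lo[of s j] l jn by simp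
          show ?thesis
          proof (cases "j < s + t")
            case True
            have jin: "j \<in> {s..<s+t}" using True ij l by simp
            then have phj: "ph j \<in> {s..<s+t}" using permutes_in_image[OF ph(1)] by blast
            then have "ph j - s \<in> \<sigma> ` {..<t}" using sig_img by auto
            then obtain l0 where l0: "l0 < t" "ph j - s = \<sigma> l0" by auto
            have phj': "ph j = s + \<sigma> l0" using l0 phj by auto
            have "b \<le> l0"
            proof (rule ccontr)
              assume "\<not> b \<le> l0"
              then have "l0 \<in> f ` {..<b}" using permutes_image[OF fperm] by auto
              then obtain l1 where l1: "l1 < b" "f l1 = l0" by auto
              have "ph (s + l1) = ph j" using ph(2) l1 phj' by simp
              then have "s + l1 = j" using permutes_inj[OF ph(1)] unfolding inj_def by blast
              then show False using l1 False by simp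
            qed
            then have "\<gamma> (ph j) \<le> \<delta>" unfolding delta phj' using l0 by (intro Max_ge) auto
            then have "\<gamma> (ph j) \<le> x\<^sup>2" using xpiv by simp
            moreover have "subcol_norm R0 s (ph j) = sqrt (\<gamma> (ph j))"
              using gamma[folded R0_def] subcol_nonneg by simp
            moreover have "sqrt (\<gamma> (ph j)) \<le> x" using sqrt_le[OF x0] calculation(1) by blast
            ultimately show ?thesis using le0 by linarith
          next
            case False
            have phj: "ph j = j" using permutes_not_in[OF ph(1)] False by simp
            have "subcol_norm R0 s j \<le> subcol_norm R0 0 j" by (rule subcol_mono) simp
            also have "\<dots> = subcol_norm (A * Pi) 0 j" using R0_AP jn by simp
            also have "\<dots> \<le> x"
            proof -
              have "(subcol_norm (A * Pi) 0 j)\<^sup>2 \<le> \<mu>" unfolding mu using False jn by (intro Max_ge) auto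
              then have "(subcol_norm (A * Pi) 0 j)\<^sup>2 \<le> x\<^sup>2" using xpiv by simp
              then show ?thesis using x0 by (rule power2_le_imp_le)
            qed
            finally show ?thesis using le0 phj by simp
          qed
        qed
      qed
      have self: "x \<le> subcol_norm R i i"
      proof -
        have "subcol_norm R i i = sqrt (vn l (col R' l))" using subR_hi[of l i] l lp st b(2) lb candR' by simp
        moreover have "(cmod (col R' l $ l))\<^sup>2 \<le> vn l (col R' l)"
          unfolding vn_def using R'c lp lb by (intro member_le_sum) auto
        moreover have "col R' l $ l = R' $$ (l,l)" using R'c lp lb by (simp add: col_index)
        ultimately show ?thesis unfolding x_def using real_le_rsqrt by simp
      qed
      have inn: "i < n" using l lb st b(2) by simp
      have "Max ((\<lambda>j. subcol_norm R i j) ` {i..<n}) = x"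
      proof (rule antisym)
        show "Max ((\<lambda>j. subcol_norm R i j) ` {i..<n}) \<le> x"
          using bound inn by (subst Max_le_iff) auto
        have "subcol_norm R i i \<le> Max ((\<lambda>j. subcol_norm R i j) ` {i..<n})"
          using inn by (intro Max_ge) auto
        then show "x \<le> Max ((\<lambda>j. subcol_norm R i j) ` {i..<n})" using self by simp
      qed
      then show ?thesis using Rii unfolding x_def by simp
    qed
  qed
qed

end
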